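(* Let $\Omega\subset\mathbb{R}^n$ be a convex open set and let $c:\Omega\times\mathbb{S}^n_-\to\mathbb{R}$, $c(x,\bar y)=\frac{\langle x,y\rangle}{y_{n+1}}$. Then $c$ is bi-Twisted, and for any $x\in\Omega$ and $p\in\mathbb{R}^n$, $$\mathrm{c\text{-}exp}_x(p)=\Big(\frac{p}{\sqrt{1+|p|^2}},-\frac{1}{\sqrt{1+|p|^2}}\Big).$$
   Context: Points of $\mathbb{S}^n\subset\mathbb{R}^{n+1}$ are written $\bar y=(y,y_{n+1})$ with $y\in\mathbb{R}^n$, and $\mathbb{S}^n_-=\{\bar y\in\mathbb{S}^n\mid y_{n+1}<0\}$. A smooth cost $c$ on $\Omega\times\mathbb{S}^n_-$ is bi-Twisted if for every $x_0\in\Omega$ and $\bar y_0\in\mathbb{S}^n_-$ the maps $\mathbb{S}^n_-\ni\bar y\mapsto -D_xc(x_0,\bar y)\in\mathbb{R}^n$ and $\Omega\ni x\mapsto -D_{\bar y}c(x,\bar y_0)\in T^*_{\bar y_0}\mathbb{S}^n$ are $C^1$ diffeomorphisms (onto their images). The inverse of $\bar y\mapsto -D_xc(x,\bar y)$ is the $c$-exponential map $\mathrm{c\text{-}exp}_x(\cdot)$. *)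

theory Defs
  imports "HOL-Analysis.Analysis"
begin

text \<open>Points of the sphere S^n in R^(n+1) are pairs (y, y_(n+1)) with y :: real^'n.
  The product norm is the Euclidean norm of R^(n+1).\<close>

definition sphere_minus :: "((real^'n) \<times> real) set" where
  "sphere_minus = {z. norm z = 1 \<and> snd z < 0}"

definition cost :: "real^'n \<Rightarrow> (real^'n) \<times> real \<Rightarrow> real" where
  "cost x z = inner x (fst z) / snd z"

text \<open>C^1 on a (possibly lower-dimensional) subset S: locally the restriction of a
  C^1 map defined on an open set of the ambient space.\<close>
definition C1_on :: "'a::real_normed_vector set \<Rightarrow> ('a \<Rightarrow> 'b::real_normed_vector) \<Rightarrow> bool" where
  "C1_on S f \<longleftrightarrow> (\<forall>z\<in>S. \<exists>U g (g' :: 'a \<Rightarrow> ('a \<Rightarrow>\<^sub>L 'b)). open U \<and> z \<in> U \<and>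
      (\<forall>u\<in>U. (g has_derivative blinfun_apply (g' u)) (at u)) \<and> continuous_on U g' \<and>
      (\<forall>u\<in>U \<inter> S. g u = f u))"

definition C1_diffeo_onto_image :: "('a::real_normed_vector \<Rightarrow> 'b::real_normed_vector) \<Rightarrow> 'a set \<Rightarrow> bool" where
  "C1_diffeo_onto_image f S \<longleftrightarrow> inj_on f S \<and> C1_on S f \<and> C1_on (f ` S) (the_inv_into S f)"

text \<open>D_x c(x0, ybar): the gradient in x (covectors of R^n identified with R^n).\<close>
definition Dx :: "(real^'n \<Rightarrow> (real^'n) \<times> real \<Rightarrow> real) \<Rightarrow> real^'n \<Rightarrow> (real^'n) \<times> real \<Rightarrow> real^'n" where
  "Dx c x0 z = (THE v. ((\<lambda>x. c x z) has_derivative (\<lambda>h. inner v h)) (at x0))"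

text \<open>D_ybar c(x, ybar0) in T*_{ybar0} S^n, identified (via the inner product) with the
  tangent space {w. <w, ybar0> = 0}: the intrinsic (Riemannian) gradient along the sphere.\<close>
definition Dybar :: "(real^'n \<Rightarrow> (real^'n) \<times> real \<Rightarrow> real) \<Rightarrow> real^'n \<Rightarrow> (real^'n) \<times> real \<Rightarrow> (real^'n) \<times> real" where
  "Dybar c x z0 = (THE v. inner v z0 = 0 \<and>
     (\<exists>L. ((\<lambda>z. c x z) has_derivative L) (at z0 within sphere_minus) \<and>
          (\<forall>w. inner w z0 = 0 \<longrightarrow> L w = inner v w)))"

definition bi_twisted :: "(real^'n) set \<Rightarrow> (real^'n \<Rightarrow> (real^'n) \<times> real \<Rightarrow> real) \<Rightarrow> bool" where
  "bi_twisted \<Omega> c \<longleftrightarrow>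
     (\<forall>x0\<in>\<Omega>. C1_diffeo_onto_image (\<lambda>z. - Dx c x0 z) sphere_minus) \<and>
     (\<forall>z0\<in>sphere_minus. C1_diffeo_onto_image (\<lambda>x. - Dybar c x z0) \<Omega>)"

definition c_exp :: "(real^'n \<Rightarrow> (real^'n) \<times> real \<Rightarrow> real) \<Rightarrow> real^'n \<Rightarrow> real^'n \<Rightarrow> (real^'n) \<times> real" where
  "c_exp c x p = the_inv_into sphere_minus (\<lambda>z. - Dx c x z) p"

end

theory Submission
  imports Defs
begin

lemma C1_onI:
  fixes g :: "'a::euclidean_space \<Rightarrow> 'b::real_normed_vector"
  assumes "open U" "S \<subseteq> U"
    and der: "\<And>u. u \<in> U \<Longrightarrow> (g has_derivative D u) (at u)"
    and cont: "\<And>i. i \<in> Basis \<Longrightarrow> continuous_on U (\<lambda>u. D u i)"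
    and eq: "\<And>u. u \<in> S \<Longrightarrow> g u = f u"
  shows "C1_on S f"
  unfolding C1_on_def
proof
  fix z assume z: "z \<in> S"
  have bl: "\<And>u. u \<in> U \<Longrightarrow> blinfun_apply (Blinfun (D u)) = D u"
    using der by (metis bounded_linear_Blinfun_apply has_derivative_bounded_linear)
  have c: "continuous_on U (\<lambda>u. Blinfun (D u))"
  proof (rule continuous_on_blinfun_componentwise)
    fix i :: 'a assume i: "i \<in> Basis"
    show "continuous_on U (\<lambda>u. blinfun_apply (Blinfun (D u)) i)"
      using cont[OF i] by (rule continuous_on_eq) (simp add: bl)
  qed
  have d: "\<forall>u\<in>U. (g has_derivative blinfun_apply (Blinfun (D u))) (at u)"
    using der bl by simp
  show "\<exists>U g (g' :: 'a \<Rightarrow> ('a \<Rightarrow>\<^sub>L 'b)). open U \<and> z \<in> U \<and>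
      (\<forall>u\<in>U. (g has_derivative blinfun_apply (g' u)) (at u)) \<and> continuous_on U g' \<and>
      (\<forall>u\<in>U \<inter> S. g u = f u)"
    apply (rule exI[of _ U], rule exI[of _ g], rule exI[of _ "\<lambda>u. Blinfun (D u)"])
    using assms z c d by auto
qed

lemma Dx_cost: "Dx cost x0 z = (1 / snd z) *\<^sub>R fst z"
  unfolding Dx_def
proof (rule the_equality)
  show "((\<lambda>x. cost x z) has_derivative (\<lambda>h. inner ((1 / snd z) *\<^sub>R fst z) h)) (at x0)"
    unfolding cost_def
    by (auto intro!: derivative_eq_intros simp: inner_commute divide_inverse)
next
  fix v assume v: "((\<lambda>x. cost x z) has_derivative (\<lambda>h. inner v h)) (at x0)"
  have "((\<lambda>x. cost x z) has_derivative (\<lambda>h. inner ((1 / snd z) *\<^sub>R fst z) h)) (at x0)"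
    unfolding cost_def
    by (auto intro!: derivative_eq_intros simp: inner_commute divide_inverse)
  from has_derivative_unique[OF v this]
  have "\<And>h. inner v h = inner ((1 / snd z) *\<^sub>R fst z) h" by metis
  hence "\<And>h. inner (v - (1 / snd z) *\<^sub>R fst z) h = 0" by (simp add: inner_diff_left)
  from this[of "v - (1 / snd z) *\<^sub>R fst z"]
  show "v = (1 / snd z) *\<^sub>R fst z" by (metis inner_eq_zero_iff eq_iff_diff_eq_0)
qed


lemma sm_iff: "z \<in> sphere_minus \<longleftrightarrow> (norm (fst z))\<^sup>2 + (snd z)\<^sup>2 = 1 \<and> snd z < 0"
proof -
  have "norm z = sqrt ((norm (fst z))\<^sup>2 + (snd z)\<^sup>2)"
    by (metis norm_Pair prod.collapse real_norm_def real_sqrt_abs power2_abs)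
  thus ?thesis unfolding sphere_minus_def by simp
qed

definition Emap :: "real^'n \<Rightarrow> (real^'n) \<times> real" where
  "Emap p = ((1 / sqrt (1 + (norm p)\<^sup>2)) *\<^sub>R p, - 1 / sqrt (1 + (norm p)\<^sup>2))"

definition Fmap :: "(real^'n) \<times> real \<Rightarrow> real^'n" where
  "Fmap z = - ((1 / snd z) *\<^sub>R fst z)"

lemma Emap_in: "Emap p \<in> sphere_minus"
proof -
  define s where "s = sqrt (1 + (norm p)\<^sup>2)"
  have s0: "s > 0" unfolding s_def by (simp add: add_pos_nonneg)
  have s2: "s\<^sup>2 = 1 + (norm p)\<^sup>2" unfolding s_def by simp
  have "(norm ((1 / s) *\<^sub>R p))\<^sup>2 + (- 1 / s)\<^sup>2 = ((norm p)\<^sup>2 + 1) / s\<^sup>2"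
    using s0 by (simp add: power_divide add_divide_distrib power2_eq_square)
  also have "\<dots> = 1" using s2 s0 by (metis add.commute div_self power_not_zero less_irrefl)
  finally show ?thesis unfolding sm_iff Emap_def s_def[symmetric] using s0 by simp
qed

lemma Fmap_Emap: "Fmap (Emap p) = p"
proof -
  define s where "s = sqrt (1 + (norm p)\<^sup>2)"
  have s0: "s > 0" unfolding s_def by (simp add: add_pos_nonneg)
  show ?thesis unfolding Fmap_def Emap_def s_def[symmetric] using s0 by simp
qed

lemma Emap_Fmap: assumes "z \<in> sphere_minus" shows "Emap (Fmap z) = z"
proof -
  obtain y t where z: "z = (y, t)" by fastforce
  have h: "(norm y)\<^sup>2 + t\<^sup>2 = 1" "t < 0" using assms by (auto simp: sm_iff z)
  have "(norm (Fmap z))\<^sup>2 = (norm y)\<^sup>2 / t\<^sup>2"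
    by (simp add: Fmap_def z power_divide)
  hence "1 + (norm (Fmap z))\<^sup>2 = 1 / t\<^sup>2" using h
    by (simp add: field_simps)
  hence "sqrt (1 + (norm (Fmap z))\<^sup>2) = - 1 / t" using h
    by (simp add: real_sqrt_divide)
  thus ?thesis using h unfolding Emap_def by (simp add: z Fmap_def)
qed

lemma inj_Fmap: "inj_on Fmap sphere_minus"
  by (metis Emap_Fmap inj_onI)

lemma c_exp_eq: "the_inv_into sphere_minus Fmap p = Emap p"
  by (rule the_inv_into_f_eq[OF inj_Fmap Fmap_Emap Emap_in])

lemma tangent_deriv_unique:
  fixes f :: "(real^'n) \<times> real \<Rightarrow> real"
  assumes z0: "z0 \<in> sphere_minus" and w: "inner w z0 = 0"
    and d1: "(f has_derivative L1) (at z0 within sphere_minus)"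
    and d2: "(f has_derivative L2) (at z0 within sphere_minus)"
  shows "L1 w = L2 w"
proof -
  define \<gamma> where "\<gamma> s = (1 / sqrt (1 + s\<^sup>2 * (norm w)\<^sup>2)) *\<^sub>R (z0 + s *\<^sub>R w)" for s :: real
  define T where "T = {s. snd (\<gamma> s) < 0}"
  have nz0: "norm z0 = 1" using z0 by (simp add: sphere_minus_def)
  have pos: "0 < 1 + s\<^sup>2 * (norm w)\<^sup>2" for s :: real
    by (intro add_pos_nonneg) auto
  have pos': "1 + s\<^sup>2 * (norm w)\<^sup>2 \<noteq> 0" for s :: real
    using pos[of s] by linarith
  have contg: "continuous_on UNIV \<gamma>" unfolding \<gamma>_def
    by (intro continuous_intros) (simp add: pos')
  have "open T" unfolding T_def
    by (intro open_Collect_less continuous_intros contg[THEN continuous_on_subset] continuous_on_snd) auto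
  have g0: "\<gamma> 0 = z0" by (simp add: \<gamma>_def)
  have "0 \<in> T" using z0 g0 by (simp add: T_def sphere_minus_def)
  have nrm: "norm (z0 + s *\<^sub>R w) = sqrt (1 + s\<^sup>2 * (norm w)\<^sup>2)" for s
  proof -
    have "(norm (z0 + s *\<^sub>R w))\<^sup>2 = inner (z0 + s *\<^sub>R w) (z0 + s *\<^sub>R w)"
      by (simp only: power2_norm_eq_inner)
    also have "\<dots> = inner z0 z0 + 2 * s * inner w z0 + s\<^sup>2 * inner w w"
      by (simp add: inner_add_left inner_add_right inner_commute power2_eq_square algebra_simps)
    also have "\<dots> = 1 + s\<^sup>2 * (norm w)\<^sup>2"
      using w nz0 by (simp add: power2_norm_eq_inner[symmetric])
    finally have "(norm (z0 + s *\<^sub>R w))\<^sup>2 = 1 + s\<^sup>2 * (norm w)\<^sup>2" .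
    thus ?thesis by (metis norm_ge_zero real_sqrt_unique)
  qed
  have gT: "\<gamma> ` T \<subseteq> sphere_minus"
  proof
    fix z assume "z \<in> \<gamma> ` T"
    then obtain s where s: "s \<in> T" "z = \<gamma> s" by auto
    have "norm z = 1" using s nrm[of s] pos[of s] unfolding \<gamma>_def
      by simp
    thus "z \<in> sphere_minus" using s by (simp add: sphere_minus_def T_def)
  qed
  have dg: "(\<gamma> has_derivative (\<lambda>s. s *\<^sub>R w)) (at 0 within T)"
  proof -
    have "(\<gamma> has_derivative (\<lambda>s. s *\<^sub>R w)) (at 0)"
      unfolding \<gamma>_def
      apply (rule derivative_eq_intros refl | simp add: pos pos')+
      done
    thus ?thesis by (rule has_derivative_at_withinI)
  qed
  have c1: "((f \<circ> \<gamma>) has_derivative (L1 \<circ> (\<lambda>s. s *\<^sub>R w))) (at 0)"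
    using diff_chain_within[OF dg has_derivative_subset[OF d1[folded g0] gT]]
    using at_within_open[OF \<open>0 \<in> T\<close> \<open>open T\<close>] by simp
  have c2: "((f \<circ> \<gamma>) has_derivative (L2 \<circ> (\<lambda>s. s *\<^sub>R w))) (at 0)"
    using diff_chain_within[OF dg has_derivative_subset[OF d2[folded g0] gT]]
    using at_within_open[OF \<open>0 \<in> T\<close> \<open>open T\<close>] by simp
  from has_derivative_unique[OF c1 c2] show ?thesis
    by (metis comp_apply scaleR_one)
qed


lemma Dybar_cost:
  assumes z0: "z0 \<in> sphere_minus"
  shows "Dybar cost x z0 = ((1 / snd z0) *\<^sub>R x, - inner x (fst z0) / (snd z0)\<^sup>2)"
proof -
  define G where "G = ((1 / snd z0) *\<^sub>R x, - inner x (fst z0) / (snd z0)\<^sup>2)"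
  have t: "snd z0 < 0" using z0 by (simp add: sm_iff)
  hence tn: "snd z0 \<noteq> 0" by simp
  have dG: "((\<lambda>z. cost x z) has_derivative (\<lambda>w. inner G w)) (at z0)"
    unfolding cost_def G_def
    by (auto intro!: derivative_eq_intros ext simp: inner_prod_def tn field_simps power2_eq_square)
  have G0: "inner G z0 = 0"
    unfolding G_def inner_prod_def using tn by (simp add: field_simps power2_eq_square)
  show ?thesis
    unfolding Dybar_def G_def[symmetric]
  proof (rule the_equality)
    show "inner G z0 = 0 \<and> (\<exists>L. ((\<lambda>z. cost x z) has_derivative L) (at z0 within sphere_minus) \<and>
          (\<forall>w. inner w z0 = 0 \<longrightarrow> L w = inner G w))"
      using G0 has_derivative_at_withinI[OF dG] by blast
  next
    fix v assume "inner v z0 = 0 \<and> (\<exists>L. ((\<lambda>z. cost x z) has_derivative L) (at z0 within sphere_minus) \<and>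
          (\<forall>w. inner w z0 = 0 \<longrightarrow> L w = inner v w))"
    then obtain L where v0: "inner v z0 = 0" and dL: "((\<lambda>z. cost x z) has_derivative L) (at z0 within sphere_minus)"
      and Lw: "\<And>w. inner w z0 = 0 \<Longrightarrow> L w = inner v w" by blast
    have wt: "inner (v - G) z0 = 0" using v0 G0 by (simp add: inner_diff_left)
    have "L (v - G) = inner G (v - G)"
      by (rule tangent_deriv_unique[OF z0 wt dL has_derivative_at_withinI[OF dG]])
    hence "inner v (v - G) = inner G (v - G)" using Lw[OF wt] by simp
    hence "inner (v - G) (v - G) = 0" by (simp add: inner_diff_left)
    thus "v = G" by simp
  qed
qed


lemma Fmap_C1: "C1_on sphere_minus Fmap"
proof (rule C1_onI[where U = "{z. snd z < 0}" and g = Fmap and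
    D = "\<lambda>u h. - ((1 / snd u) *\<^sub>R fst h) + (snd h / (snd u)\<^sup>2) *\<^sub>R fst u"])
  show "open {z :: (real^'n) \<times> real. snd z < 0}"
    by (intro open_Collect_less continuous_intros)
  show "sphere_minus \<subseteq> {z :: (real^'n) \<times> real. snd z < 0}" by (auto simp: sm_iff)
  fix u :: "(real^'n) \<times> real" assume "u \<in> {z. snd z < 0}"
  hence tn: "snd u \<noteq> 0" by simp
  show "(Fmap has_derivative (\<lambda>h. - ((1 / snd u) *\<^sub>R fst h) + (snd h / (snd u)\<^sup>2) *\<^sub>R fst u)) (at u)"
    unfolding Fmap_def
    by (auto intro!: derivative_eq_intros ext simp: tn field_simps power2_eq_square)
next
  fix i :: "(real^'n) \<times> real"
  show "continuous_on {z. snd z < 0} (\<lambda>u. - ((1 / snd u) *\<^sub>R fst i) + (snd i / (snd u)\<^sup>2) *\<^sub>R fst u)"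
    by (intro continuous_intros) auto
qed auto

lemma E_deriv:
  fixes u :: "real^'n" and r :: "real^'n \<Rightarrow> real"
  assumes dr: "(r has_derivative (\<lambda>h. inner u h / r u)) (at u)"
  and r0: "r u \<noteq> 0"
  shows "((\<lambda>p. ((1 / r p) *\<^sub>R p, - 1 / r p)) has_derivative (\<lambda>h. ((1 / r u) *\<^sub>R h - (inner u h / (r u)^3) *\<^sub>R u,
                inner u h / (r u)^3))) (at u)"
proof -
  have e: "\<And>a R::real. inverse R * (a / R) * inverse R = a / R^3"
    by (case_tac "R = 0") (simp_all add: field_simps power3_eq_cube)
  show ?thesis
    apply (rule has_derivative_eq_rhs)
     apply (rule derivative_eq_intros refl dr r0)+
    using e by (intro ext) simp
qed

lemma Emap_C1:
  fixes S :: "(real^'n) set"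
  shows "C1_on S (Emap :: real^'n \<Rightarrow> _)"
proof -
  define r where "r = (\<lambda>p::real^'n. sqrt (1 + inner p p))"
  have E: "Emap = (\<lambda>p. ((1 / r p) *\<^sub>R p, - 1 / r p))"
    by (intro ext) (simp add: Emap_def r_def power2_norm_eq_inner)
  have pos: "0 < 1 + inner p p" for p :: "real^'n"
    by (intro add_pos_nonneg) auto
  have r0: "r p \<noteq> 0" for p unfolding r_def using pos[of p] by simp
  have rc: "continuous_on UNIV r" unfolding r_def by (intro continuous_intros)
  have rl: "\<And>a s::real. (0 + (a + a)) * (inverse s / 2) = a / s" by (simp add: field_simps)
  have dr: "(r has_derivative (\<lambda>h. inner u h / r u)) (at u)" for u
  proof -
    have "((\<lambda>p. sqrt (1 + inner p p)) has_derivative (\<lambda>h. inner u h / sqrt (1 + inner u u))) (at u)"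
      apply (rule has_derivative_eq_rhs)
       apply (rule derivative_eq_intros refl pos)+
    proof
      fix h
      have "h \<bullet> u = u \<bullet> h" by (rule inner_commute)
      thus "(0 + (u \<bullet> h + h \<bullet> u)) * (inverse (sqrt (1 + u \<bullet> u)) / 2) = u \<bullet> h / sqrt (1 + u \<bullet> u)"
        using rl[of "u \<bullet> h" "sqrt (1 + u \<bullet> u)"] by simp
    qed
    thus ?thesis unfolding r_def .
  qed
  show ?thesis unfolding E
  proof (rule C1_onI[where U = UNIV and
    D = "\<lambda>p h. ((1 / r p) *\<^sub>R h - (inner p h / (r p)^3) *\<^sub>R p, inner p h / (r p)^3)"])
    fix u :: "real^'n"
    show "((\<lambda>p. ((1 / r p) *\<^sub>R p, - 1 / r p)) has_derivative (\<lambda>h. ((1 / r u) *\<^sub>R h - (inner u h / (r u)^3) *\<^sub>R u, inner u h / (r u)^3))) (at u)"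
      by (rule E_deriv[OF dr r0])
  next
    fix i :: "real^'n"
    show "continuous_on UNIV (\<lambda>p. ((1 / r p) *\<^sub>R i - (inner p i / (r p)^3) *\<^sub>R p, inner p i / (r p)^3))"
      by (intro continuous_intros rc) (auto simp: r0)
  qed auto
qed


lemma H_part:
  fixes \<Omega> :: "(real^'n) set"
  assumes z0: "z0 \<in> sphere_minus"
  shows "C1_diffeo_onto_image (\<lambda>x. - Dybar cost x z0) \<Omega>"
proof -
  obtain y t where zz: "z0 = (y, t)" by fastforce
  have t: "t < 0" using z0 by (simp add: sm_iff zz)
  hence tn: "t \<noteq> 0" by simp
  define H where "H x = (- (1 / t) *\<^sub>R x, inner x y / t\<^sup>2)" for x :: "real^'n"
  have eqH: "(\<lambda>x. - Dybar cost x z0) = H"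
    using Dybar_cost[OF z0[unfolded zz]] by (intro ext) (simp add: zz H_def)
  have inj: "inj_on H \<Omega>"
    by (rule inj_onI) (simp add: H_def tn)
  have dH: "(H has_derivative H) (at u)" for u
    unfolding H_def[abs_def]
    by (rule has_derivative_eq_rhs, (rule derivative_eq_intros refl)+, simp add: tn, (rule refl)+) (simp add: fun_eq_iff)
  have C1H: "C1_on \<Omega> H"
    by (rule C1_onI[where U = UNIV and g = H and D = "\<lambda>u. H"]) (auto simp: dH)
  define G where "G v = (- t) *\<^sub>R fst v" for v :: "(real^'n) \<times> real"
  have dG: "(G has_derivative G) (at u)" for u
    unfolding G_def[abs_def]
    by (rule has_derivative_eq_rhs, (rule derivative_eq_intros refl)+) (simp add: fun_eq_iff)
  have GH: "G u = the_inv_into \<Omega> H u" if uH: "u \<in> H ` \<Omega>" for u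
  proof -
    obtain x where x: "x \<in> \<Omega>" "u = H x" using uH by blast
    have "G u = x" using tn by (simp add: x G_def H_def)
    thus ?thesis using the_inv_into_f_f[OF inj x(1)] x by simp
  qed
  have C1G: "C1_on (H ` \<Omega>) (the_inv_into \<Omega> H)"
    by (rule C1_onI[where U = UNIV and g = G and D = "\<lambda>u. G"]) (auto simp: dG GH)
  show ?thesis unfolding eqH C1_diffeo_onto_image_def using inj C1H C1G by blast
qed

theorem proposition4p2:
  fixes \<Omega> :: "(real^'n) set"
  assumes "convex \<Omega>" and "open \<Omega>"
  shows "bi_twisted \<Omega> cost \<and>
    (\<forall>x\<in>\<Omega>. \<forall>p::real^'n.
       c_exp cost x p = ((1 / sqrt (1 + (norm p)\<^sup>2)) *\<^sub>R p, - 1 / sqrt (1 + (norm p)\<^sup>2)))"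
proof -
  have eqF: "(\<lambda>z. - Dx cost x0 z) = Fmap" for x0 :: "real^'n"
    by (intro ext) (simp add: Dx_cost Fmap_def)
  have P1: "C1_diffeo_onto_image (\<lambda>z. - Dx cost x0 z) sphere_minus" for x0 :: "real^'n"
    unfolding eqF C1_diffeo_onto_image_def
    using inj_Fmap Fmap_C1 Emap_C1 c_exp_eq
    by (metis ext)
  have "bi_twisted \<Omega> cost"
    unfolding bi_twisted_def using P1 H_part by blast
  moreover have "c_exp cost x p = ((1 / sqrt (1 + (norm p)\<^sup>2)) *\<^sub>R p, - 1 / sqrt (1 + (norm p)\<^sup>2))"
    for x p :: "real^'n"
    unfolding c_exp_def eqF c_exp_eq Emap_def ..
  ultimately show ?thesis by blast
qed

end
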